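(* Let $A$ be a finitely generated $K$-algebra with a filtration $\mathcal{F}=\{V_n\}_{n\ge0}$. Fix an integer $k\ge1$ and let $\mathcal{G}=\{W_n\}_{n\ge0}$ be the filtration $W_n:=V_{nk}$. Then $\mathrm{h}_{\mathrm{alg}}(A,\mathcal{G})=k\cdot\mathrm{h}_{\mathrm{alg}}(A,\mathcal{F})$.
   Context: A filtration of a $K$-algebra $A$ is a family $\{V_n\}_{n\ge0}$ of subspaces with $0=V_0\subseteq V_1\subseteq\cdots$, $A=\bigcup_nV_n$ and $V_nV_m\subseteq V_{n+m}$; the quotients $V_n/V_{n-1}$ are assumed finite-dimensional. The algebraic entropy is $\mathrm{h}_{\mathrm{alg}}(A,\mathcal{F})=0$ if $A$ is finite-dimensional and otherwise $\limsup_{n\to\infty}\frac{\log\dim(V_n/V_{n-1})}{n}$ (with $\log0=-\infty$). *)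

theory Defs
  imports Complex_Main "HOL-Library.Extended_Real"
begin

definition is_K_algebra :: "('k::field \<Rightarrow> 'a::ring_1 \<Rightarrow> 'a) \<Rightarrow> bool" where
  "is_K_algebra scale \<longleftrightarrow> vector_space scale \<and>
     (\<forall>c x y. scale c (x * y) = scale c x * y \<and> scale c (x * y) = x * scale c y)"

definition gen_subalgebra :: "('k::field \<Rightarrow> 'a::ring_1 \<Rightarrow> 'a) \<Rightarrow> 'a set \<Rightarrow> 'a set" where
  "gen_subalgebra scale S = module.span scale {prod_list xs | xs. set xs \<subseteq> S}"

definition finitely_generated :: "('k::field \<Rightarrow> 'a::ring_1 \<Rightarrow> 'a) \<Rightarrow> bool" where
  "finitely_generated scale \<longleftrightarrow> (\<exists>S. finite S \<and> gen_subalgebra scale S = UNIV)"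

definition finite_dim_algebra :: "('k::field \<Rightarrow> 'a::ring_1 \<Rightarrow> 'a) \<Rightarrow> bool" where
  "finite_dim_algebra scale \<longleftrightarrow> (\<exists>B. finite B \<and> module.span scale B = UNIV)"

text \<open>dim(V_n / V_(n-1)): least number of vectors of V_n spanning V_n modulo V_(n-1).\<close>
definition quot_dim :: "('k::field \<Rightarrow> 'a::ring_1 \<Rightarrow> 'a) \<Rightarrow> 'a set \<Rightarrow> 'a set \<Rightarrow> nat" where
  "quot_dim scale U W = (LEAST d. \<exists>B. finite B \<and> card B = d \<and> B \<subseteq> U \<and>
        U \<subseteq> module.span scale (W \<union> B))"

definition is_filtration :: "('k::field \<Rightarrow> 'a::ring_1 \<Rightarrow> 'a) \<Rightarrow> (nat \<Rightarrow> 'a set) \<Rightarrow> bool" where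
  "is_filtration scale V \<longleftrightarrow>
     V 0 = {0} \<and>
     (\<forall>n. module.subspace scale (V n)) \<and>
     (\<forall>n. V n \<subseteq> V (Suc n)) \<and>
     (\<Union>n. V n) = UNIV \<and>
     (\<forall>n m x y. x \<in> V n \<longrightarrow> y \<in> V m \<longrightarrow> x * y \<in> V (n + m)) \<and>
     (\<forall>n. \<exists>B. finite B \<and> V (Suc n) \<subseteq> module.span scale (V n \<union> B))"

definition elog :: "nat \<Rightarrow> ereal" where
  "elog d = (if d = 0 then -\<infinity> else ereal (ln (real d)))"

definition h_alg :: "('k::field \<Rightarrow> 'a::ring_1 \<Rightarrow> 'a) \<Rightarrow> (nat \<Rightarrow> 'a set) \<Rightarrow> ereal" where
  "h_alg scale V = (if finite_dim_algebra scale then 0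
     else limsup (\<lambda>n. elog (quot_dim scale (V n) (V (n - 1))) / ereal (real n)))"

end

theory Submission
  imports Defs
begin


context vector_space begin

lemma span_finite_subset:
  assumes "x \<in> span S" shows "\<exists>T. finite T \<and> T \<subseteq> S \<and> x \<in> span T"
  using assms
proof (induct rule: span_induct_alt)
  case base then show ?case by (intro exI[of _ "{}"]) (auto simp: span_zero)
next
  case (step c x y)
  then obtain T where T: "finite T" "T \<subseteq> S" "y \<in> span T" by blast
  have "c *s x + y \<in> span (insert x T)"
    by (meson T(3) span_add span_base span_mono span_scale insertI1 subset_insertI subsetD)
  then show ?case using T step(1) by (intro exI[of _ "insert x T"]) auto
qed

lemma span_finite_subset_set:
  assumes "finite F" "F \<subseteq> span S" shows "\<exists>T. finite T \<and> T \<subseteq> S \<and> F \<subseteq> span T"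
  using assms
proof (induct F rule: finite_induct)
  case empty then show ?case by auto
next
  case (insert x F)
  then obtain T where T: "finite T" "T \<subseteq> S" "F \<subseteq> span T" by auto
  obtain T' where T': "finite T'" "T' \<subseteq> S" "x \<in> span T'" using insert(4) span_finite_subset[of x S] by auto
  show ?case using T T' span_mono[of T "T \<union> T'"] span_mono[of T' "T \<union> T'"]
    by (intro exI[of _ "T \<union> T'"]) auto
qed

lemma key_reduce:
  assumes W: "subspace W" and WU: "W \<subseteq> U" and fB: "finite B" and UB: "U \<subseteq> span (W \<union> B)"
  shows "\<exists>B'. finite B' \<and> B' \<subseteq> U \<and> U \<subseteq> span (W \<union> B') \<and> card B' \<le> card B"
proof -
  obtain P where P: "P \<subseteq> W" "independent P" "W \<subseteq> span P"
    using maximal_independent_subset[of W] by blast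
  obtain Q where Q: "P \<subseteq> Q" "Q \<subseteq> U" "independent Q" "U \<subseteq> span Q"
    using maximal_independent_subset_extend[of P U] P WU by blast
  have WBspan: "span (W \<union> B) \<subseteq> span (P \<union> B)"
  proof (rule span_minimal)
    show "W \<union> B \<subseteq> span (P \<union> B)"
      using P(3) span_mono[of P "P \<union> B"] span_superset[of "P \<union> B"] by auto
  qed auto
  have bound: "card F \<le> card B" if F: "finite F" "F \<subseteq> Q - P" for F
  proof -
    have "F \<subseteq> U" using F(2) Q(2) by blast
    then have "F \<subseteq> span (P \<union> B)" using UB WBspan by (meson order_trans)
    then obtain T where T: "finite T" "T \<subseteq> P \<union> B" "F \<subseteq> span T"
      using span_finite_subset_set[OF F(1)] by metis
    let ?P0 = "T \<inter> P"
    have "T \<subseteq> ?P0 \<union> B" using T(2) by auto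
    then have sT: "span T \<subseteq> span (?P0 \<union> B)" by (rule span_mono)
    have "F \<union> ?P0 \<subseteq> span (?P0 \<union> B)"
      using T(3) sT span_superset[of "?P0 \<union> B"] by auto
    moreover have "F \<union> ?P0 \<subseteq> Q" using F(2) Q(1) by blast
    then have "independent (F \<union> ?P0)"
      using Q(3) independent_mono by metis
    moreover have "finite (?P0 \<union> B)" using T(1) fB by auto
    ultimately have "card (F \<union> ?P0) \<le> card (?P0 \<union> B)"
      using independent_span_bound by metis
    also have "\<dots> \<le> card ?P0 + card B" by (rule card_Un_le)
    finally have "card (F \<union> ?P0) \<le> card ?P0 + card B" .
    moreover have "card (F \<union> ?P0) = card F + card ?P0"
      using F T(1) by (intro card_Un_disjoint) auto
    ultimately show ?thesis by simp
  qed
  have fin: "finite (Q - P)"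
  proof (rule ccontr)
    assume "infinite (Q - P)"
    then obtain F where "finite F" "card F = Suc (card B)" "F \<subseteq> Q - P"
      using infinite_arbitrarily_large by blast
    then show False using bound by fastforce
  qed
  have "U \<subseteq> span (W \<union> (Q - P))"
  proof -
    have "Q \<subseteq> W \<union> (Q - P)" using P by auto
    then show ?thesis using Q(4) span_mono by blast
  qed
  then show ?thesis using fin bound[OF fin] Q
    by (intro exI[of _ "Q - P"]) auto
qed

end


context
  fixes scale :: "'k::field \<Rightarrow> 'a::ring_1 \<Rightarrow> 'a" and V :: "nat \<Rightarrow> 'a set"
  assumes vs: "vector_space scale" and F: "is_filtration scale V"
begin

interpretation vs: vector_space scale by (rule vs)

lemma V_mono: "a \<le> b \<Longrightarrow> V a \<subseteq> V b"
proof -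
  have "\<And>n. V n \<subseteq> V (Suc n)" using F unfolding is_filtration_def by blast
  then show "a \<le> b \<Longrightarrow> V a \<subseteq> V b" using lift_Suc_mono_le[of V a b] by blast
qed

lemma V_sub: "vs.subspace (V n)"
  using F unfolding is_filtration_def by blast

lemma V_step: "\<exists>B. finite B \<and> V (Suc n) \<subseteq> vs.span (V n \<union> B)"
  using F unfolding is_filtration_def by blast

lemma V_span_trans:
  assumes "U \<subseteq> vs.span (M \<union> B1)" "M \<subseteq> vs.span (W \<union> B2)"
  shows "U \<subseteq> vs.span (W \<union> (B1 \<union> B2))"
proof -
  let ?S = "W \<union> (B1 \<union> B2)"
  have s1: "W \<union> B2 \<subseteq> ?S" by (rule Un_mono) simp_all
  have "vs.span (W \<union> B2) \<subseteq> vs.span ?S" using vs.span_mono[OF s1] .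
  then have m: "M \<subseteq> vs.span ?S" by (rule subset_trans[OF assms(2)])
  have s2: "B1 \<subseteq> ?S" by blast
  have b: "B1 \<subseteq> vs.span ?S" using order_trans[OF s2 vs.span_superset[of ?S]] .
  have "M \<union> B1 \<subseteq> vs.span ?S" using m b by (rule Un_least)
  then have "vs.span (M \<union> B1) \<subseteq> vs.span ?S"
    using vs.span_minimal[OF _ vs.subspace_span] by metis
  then show ?thesis by (rule subset_trans[OF assms(1)])
qed

lemma V_fin: "a \<le> b \<Longrightarrow> \<exists>B. finite B \<and> V b \<subseteq> vs.span (V a \<union> B)"
proof (induction b)
  case 0
  then have "a = 0" by simp
  have "V 0 \<subseteq> vs.span (V 0 \<union> {})" using vs.span_superset[of "V 0"] by simp
  then show ?case using \<open>a = 0\<close> finite.emptyI by blast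
next
  case (Suc b)
  show ?case
  proof (cases "a = Suc b")
    case True
    have "V a \<subseteq> vs.span (V a \<union> {})" using vs.span_superset[of "V a"] by simp
    then show ?thesis using True finite.emptyI by blast
  next
    case False
    then have "a \<le> b" using Suc.prems by simp
    then obtain B2 where B2: "finite B2" "V b \<subseteq> vs.span (V a \<union> B2)" using Suc.IH by blast
    obtain B1 where B1: "finite B1" "V (Suc b) \<subseteq> vs.span (V b \<union> B1)" using V_step by blast
    have "finite (B1 \<union> B2)" using B1(1) B2(1) by blast
    then show ?thesis using V_span_trans[OF B1(2) B2(2)] by blast
  qed
qed

lemma qd_le:
  assumes "finite B" "B \<subseteq> U" "U \<subseteq> vs.span (W \<union> B)"
  shows "quot_dim scale U W \<le> card B"
  unfolding quot_dim_def using assms by (intro Least_le) blast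

lemma qd_attained:
  assumes "a \<le> b"
  shows "\<exists>B. finite B \<and> card B = quot_dim scale (V b) (V a) \<and> B \<subseteq> V b \<and> V b \<subseteq> vs.span (V a \<union> B)"
proof -
  obtain B0 where B0: "finite B0" "V b \<subseteq> vs.span (V a \<union> B0)" using V_fin[OF assms] by blast
  obtain B where "finite B" "B \<subseteq> V b" "V b \<subseteq> vs.span (V a \<union> B)"
    using vs.key_reduce[OF V_sub V_mono[OF assms] B0] by blast
  then have ex: "\<exists>d B. finite B \<and> card B = d \<and> B \<subseteq> V b \<and> V b \<subseteq> vs.span (V a \<union> B)" by blast
  show ?thesis unfolding quot_dim_def using LeastI_ex[OF ex] .
qed

lemma qd_mono:
  assumes "a \<le> a'" "a' \<le> b'" "b' \<le> b"
  shows "quot_dim scale (V b') (V a') \<le> quot_dim scale (V b) (V a)"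
proof -
  have ab: "a \<le> b" using assms by linarith
  obtain B where B: "finite B" "card B = quot_dim scale (V b) (V a)" "B \<subseteq> V b"
     "V b \<subseteq> vs.span (V a \<union> B)" using qd_attained[OF ab] by blast
  have "vs.span (V a \<union> B) \<subseteq> vs.span (V a' \<union> B)"
    using V_mono[OF assms(1)] by (intro vs.span_mono) auto
  then have "V b' \<subseteq> vs.span (V a' \<union> B)" using V_mono[OF assms(3)] B(4) by blast
  then obtain B' where B': "finite B'" "B' \<subseteq> V b'" "V b' \<subseteq> vs.span (V a' \<union> B')" "card B' \<le> card B"
    using vs.key_reduce[OF V_sub V_mono[OF assms(2)] B(1)] by blast
  have "quot_dim scale (V b') (V a') \<le> card B'" using qd_le B' by blast
  then show ?thesis using B'(4) B(2) by linarith
qed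

lemma qd_triangle:
  assumes "a \<le> m" "m \<le> b"
  shows "quot_dim scale (V b) (V a) \<le> quot_dim scale (V b) (V m) + quot_dim scale (V m) (V a)"
proof -
  obtain B1 where B1: "finite B1" "card B1 = quot_dim scale (V b) (V m)" "B1 \<subseteq> V b"
     "V b \<subseteq> vs.span (V m \<union> B1)" using qd_attained[OF assms(2)] by blast
  obtain B2 where B2: "finite B2" "card B2 = quot_dim scale (V m) (V a)" "B2 \<subseteq> V m"
     "V m \<subseteq> vs.span (V a \<union> B2)" using qd_attained[OF assms(1)] by blast
  have f: "finite (B1 \<union> B2)" using B1(1) B2(1) by blast
  have s: "B1 \<union> B2 \<subseteq> V b" using B1(3) B2(3) V_mono[OF assms(2)] by blast
  have "quot_dim scale (V b) (V a) \<le> card (B1 \<union> B2)"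
    using qd_le[OF f s V_span_trans[OF B1(4) B2(4)]] .
  also have "\<dots> \<le> card B1 + card B2" by (rule card_Un_le)
  also have "\<dots> = quot_dim scale (V b) (V m) + quot_dim scale (V m) (V a)"
    by (simp only: B1(2) B2(2))
  finally show ?thesis .
qed

lemma qd_block:
  assumes "\<And>i. i < k \<Longrightarrow> real (quot_dim scale (V (m + i + 1)) (V (m + i))) \<le> M"
  shows "real (quot_dim scale (V (m + k)) (V m)) \<le> real k * M"
  using assms
proof (induction k)
  case 0
  have "quot_dim scale (V m) (V m) \<le> card ({}::'a set)"
    using vs.span_superset[of "V m"] by (intro qd_le) auto
  then show ?case by simp
next
  case (Suc k)
  have IH: "real (quot_dim scale (V (m + k)) (V m)) \<le> real k * M" using Suc by auto
  have one: "real (quot_dim scale (V (m + k + 1)) (V (m + k))) \<le> M" using Suc by auto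
  have "quot_dim scale (V (m + Suc k)) (V m) \<le> quot_dim scale (V (m + k + 1)) (V (m + k)) + quot_dim scale (V (m + k)) (V m)"
    using qd_triangle[of m "m + k" "m + Suc k"] by simp
  then have "real (quot_dim scale (V (m + Suc k)) (V m)) \<le> M + real k * M"
    using IH one by linarith
  then show ?case by (simp add: algebra_simps)
qed

lemma infinite_steps:
  assumes "\<not> finite_dim_algebra scale"
  shows "\<exists>j\<ge>N. quot_dim scale (V (Suc j)) (V j) \<ge> 1"
proof (rule ccontr)
  assume "\<not> ?thesis"
  then have z: "\<And>j. j \<ge> N \<Longrightarrow> quot_dim scale (V (Suc j)) (V j) = 0" by fastforce
  have stab: "V j \<subseteq> V N" if "j \<ge> N" for j
    using that
  proof (induction j rule: dec_induct)
    case base then show ?case by simp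
  next
    case (step j)
    obtain B where B: "finite B" "card B = 0" "V (Suc j) \<subseteq> vs.span (V j \<union> B)"
      using qd_attained[of j "Suc j"] z[OF step(1)] by auto
    have "B = {}" using B by simp
    have "vs.span (V j) = V j" using V_sub[of j] vs.span_eq_iff by blast
    then have "V (Suc j) \<subseteq> V j" using B(3) \<open>B = {}\<close> by (metis Un_empty_right)
    then show ?case using step by blast
  qed
  have "V j \<subseteq> V N" for j
    using stab V_mono[of j N] by (cases "j \<le> N") auto
  moreover have "(\<Union>n. V n) = UNIV" using F unfolding is_filtration_def by blast
  ultimately have "V N = UNIV" by blast
  obtain B where B: "finite B" "V N \<subseteq> vs.span (V 0 \<union> B)" using V_fin[of 0 N] by blast
  have "V 0 = {0}" using F unfolding is_filtration_def by blast
  then have "vs.span (V 0 \<union> B) = vs.span B"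
    using vs.span_insert_0[of B] by simp
  then have "vs.span B = UNIV" using B(2) \<open>V N = UNIV\<close> by auto
  then have "finite_dim_algebra scale" unfolding finite_dim_algebra_def using B(1) by blast
  then show False using assms by contradiction
qed

end


lemma ediv: "0 < n \<Longrightarrow> elog m / ereal (real n) = (if m = 0 then -\<infinity> else ereal (ln (real m) / real n))"
  by (simp add: elog_def)

lemma block_index:
  fixes j k :: nat assumes "k \<ge> 1" "j \<ge> 1"
  defines "n \<equiv> (j - 1) div k + 1"
  shows "n \<ge> 1" "(n - 1) * k < j" "j \<le> n * k"
proof -
  have 1: "(j - 1) div k * k \<le> j - 1" by (simp add: div_times_less_eq_dividend)
  have m: "(j - 1) mod k < k" using assms(1) by simp
  have e: "(j - 1) div k * k + (j - 1) mod k = j - 1" by (rule div_mult_mod_eq)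
  have 2: "j - 1 < (j - 1) div k * k + k" using m e by linarith
  show "n \<ge> 1" unfolding n_def by simp
  show "(n - 1) * k < j" unfolding n_def using 1 assms(2) by (simp del: div_times_less_eq_dividend)
  show "j \<le> n * k" unfolding n_def using 2 assms(2) by (simp add: algebra_simps)
qed


lemma limsup_block:
  fixes d e :: "nat \<Rightarrow> nat" and k :: nat
  assumes k: "k \<ge> 1"
   and A: "\<And>n j. n \<ge> 1 \<Longrightarrow> (n - 1) * k < j \<Longrightarrow> j \<le> n * k \<Longrightarrow> d j \<le> e n"
   and B: "\<And>n M. n \<ge> 1 \<Longrightarrow> (\<And>j. (n - 1) * k < j \<Longrightarrow> j \<le> n * k \<Longrightarrow> real (d j) \<le> M) \<Longrightarrow> real (e n) \<le> real k * M"
   and C: "\<And>N. \<exists>j\<ge>N. d j \<ge> 1"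
  shows "limsup (\<lambda>n. elog (e n) / ereal (real n)) = ereal (real k) * limsup (\<lambda>j. elog (d j) / ereal (real j))"
proof -
  define a where "a = (\<lambda>j. elog (d j) / ereal (real j))"
  define b where "b = (\<lambda>n. elog (e n) / ereal (real n))"
  define H where "H = limsup a"
  define G where "G = limsup b"
  have kpos: "real k > 0" using k by simp
  have H0: "H \<ge> 0"
  proof (rule ccontr)
    assume "\<not> H \<ge> 0"
    then have "H < 0" by simp
    then have "eventually (\<lambda>j. a j < 0) sequentially" unfolding H_def by (rule Limsup_lessD)
    then obtain J where J: "\<And>j. j \<ge> J \<Longrightarrow> a j < 0" unfolding eventually_sequentially by blast
    obtain j where j: "j \<ge> Suc J" "d j \<ge> 1" using C by blast
    have "a j = ereal (ln (real (d j)) / real j)" unfolding a_def using j by (subst ediv) auto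
    moreover have "ln (real (d j)) / real j \<ge> 0" using j by simp
    ultimately have "a j \<ge> 0" by simp
    then show False using J[of j] j by simp
  qed
  have upper: "G \<le> ereal (real k) * H"
    unfolding G_def Limsup_le_iff
  proof (intro allI impI)
    fix y assume y: "y > ereal (real k) * H"
    show "eventually (\<lambda>n. y > b n) sequentially"
    proof (cases y)
      case PInf
      have "b n < \<infinity>" if "n \<ge> 1" for n
        unfolding b_def using that by (subst ediv) auto
      then show ?thesis unfolding PInf eventually_sequentially by blast
    next
      case MInf
      then show ?thesis using y by simp
    next
      case (real r)
      have "H \<noteq> \<infinity>" using y kpos real by auto
      then obtain h where h: "H = ereal h" using H0 by (cases H) auto
      have h0: "h \<ge> 0" using H0 h by simp
      have khr: "real k * h < r" using y h real by simp
      define q where "q = r / real k"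
      define z where "z = (h + q) / 2"
      have hr: "h < q" using khr kpos unfolding q_def by (simp add: field_simps)
      have hz: "h < z" using hr unfolding z_def by (simp add: field_simps)
      have zr': "z < q" using hr unfolding z_def by (simp add: field_simps)
      then have zr: "z < r / real k" unfolding q_def .
      have z0: "z \<ge> 0" using h0 hz by simp
      have zk: "z * real k < r" using zr kpos by (simp add: field_simps)
      have "eventually (\<lambda>j. a j < ereal z) sequentially"
        unfolding a_def using hz h H_def a_def by (intro Limsup_lessD) simp
      then obtain J where J: "\<And>j. j \<ge> J \<Longrightarrow> a j < ereal z" unfolding eventually_sequentially by blast
      obtain N0 :: nat where N0: "ln (real k) / (r - z * real k) < real N0" using reals_Archimedean2 by blast
      have "b n < ereal r" if n: "n \<ge> Suc (max J N0)" for n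
      proof -
        have n1: "n \<ge> 1" using n by simp
        have dj: "real (d j) \<le> exp (z * real (n * k))" if j: "(n - 1) * k < j" "j \<le> n * k" for j
        proof (cases "d j = 0")
          case True then show ?thesis by simp
        next
          case False
          have "(n - 1) \<le> (n - 1) * k" using k by simp
          then have jJ: "j \<ge> J" and j1: "j \<ge> 1" using n j by linarith+
          have "a j = ereal (ln (real (d j)) / real j)" unfolding a_def using j1 False by (subst ediv) auto
          then have "ln (real (d j)) / real j < z" using J[OF jJ] by simp
          then have "ln (real (d j)) < z * real j" using j1 by (simp add: field_simps)
          also have "\<dots> \<le> z * real (n * k)"
            using mult_left_mono[OF iffD2[OF of_nat_le_iff j(2)] z0] .
          finally have "ln (real (d j)) < z * real (n * k)" .
          then have "exp (ln (real (d j))) < exp (z * real (n * k))" by simp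
          then show ?thesis using False by simp
        qed
        have en: "real (e n) \<le> real k * exp (z * real (n * k))" using B[OF n1] dj by blast
        show ?thesis
        proof (cases "e n = 0")
          case True then show ?thesis unfolding b_def using n1 by (subst ediv) auto
        next
          case False
          have "ln (real (e n)) \<le> ln (real k * exp (z * real (n * k)))"
            using en False by (subst ln_le_cancel_iff) auto
          also have "\<dots> = ln (real k) + z * real (n * k)" using kpos by (simp add: ln_mult)
          finally have l: "ln (real (e n)) \<le> ln (real k) + z * real n * real k" by simp
          have rz: "r - z * real k > 0" using zk by simp
          have "ln (real k) < real N0 * (r - z * real k)" using N0 rz by (simp add: field_simps)
          also have "\<dots> \<le> real n * (r - z * real k)" using n rz by (intro mult_right_mono) auto
          finally have "ln (real k) + z * real n * real k < r * real n" by (simp add: algebra_simps)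
          with l have "ln (real (e n)) < r * real n" by linarith
          then have "ln (real (e n)) / real n < r" using n1 by (simp add: field_simps)
          then show ?thesis unfolding b_def using n1 False by (subst ediv) auto
        qed
      qed
      then show ?thesis unfolding real eventually_sequentially by blast
    qed
  qed
  have lower: "ereal (real k) * H \<le> G"
  proof (rule ccontr)
    assume "\<not> ereal (real k) * H \<le> G"
    then have "G < ereal (real k) * H" by simp
    then obtain y where y1: "G < y" and y2: "y < ereal (real k) * H" using dense by blast
    have "eventually (\<lambda>n. b n < y) sequentially" using y1 unfolding G_def by (rule Limsup_lessD)
    then obtain N where N: "\<And>n. n \<ge> N \<Longrightarrow> b n < y" unfolding eventually_sequentially by blast
    show False
    proof (cases y)
      case PInf then show False using y2 by simp
    next
      case MInf then show False using N[of N] by simp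
    next
      case (real r)
      show False
      proof (cases "r < 0")
        case True
        obtain j where j: "j \<ge> N * k + 1" "d j \<ge> 1" using C by blast
        have j1: "j \<ge> 1" using j by simp
        define n where "n = (j - 1) div k + 1"
        note bi = block_index[OF k j1, folded n_def]
        have "N * k \<le> j - 1" using j by simp
        then have "N \<le> (j - 1) div k" using k by (subst less_eq_div_iff_mult_less_eq) simp_all
        then have nN: "n \<ge> N" unfolding n_def by simp
        have "e n \<ge> 1" using A[OF bi] j by simp
        then have "b n = ereal (ln (real (e n)) / real n)" unfolding b_def using bi(1) by (subst ediv) auto
        moreover have "ln (real (e n)) / real n \<ge> 0" using \<open>e n \<ge> 1\<close> by simp
        ultimately have "b n \<ge> ereal r" using True by simp
        then show False using N[OF nN] real by simp
      next
        case False
        then have r0: "r \<ge> 0" by simp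
        have "ereal (r / real k) < H"
        proof -
          have "ereal r < ereal (real k) * H" using y2 real by simp
          then show ?thesis using kpos
            by (cases H) (auto simp: field_simps)
        qed
        then obtain z' where z1: "ereal (r / real k) < z'" and z2: "z' < H" using dense by blast
        then obtain z where zz: "z' = ereal z" by (cases z') auto
        have rz: "r / real k < z" using z1 zz by simp
        have "r / real k \<ge> 0" using r0 kpos by simp
        then have z0: "z > 0" using rz by linarith
        have zk: "r < z * real k" using rz kpos by (simp add: field_simps)
        have freq: "\<exists>j\<ge>M. a j > ereal z" for M
        proof (rule ccontr)
          assume "\<not> (\<exists>j\<ge>M. a j > ereal z)"
          then have "eventually (\<lambda>j. a j \<le> ereal z) sequentially"
            unfolding eventually_sequentially using not_less by blast
          then have "H \<le> ereal z" unfolding H_def by (rule Limsup_bounded)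
          then show False using z2 zz by simp
        qed
        obtain N1 :: nat where N1: "z * (real k - 1) / (z * real k - r) < real N1" using reals_Archimedean2 by blast
        define Nm where "Nm = max N N1"
        obtain j where j: "j \<ge> Nm * k + 1" "a j > ereal z" using freq by blast
        have j1: "j \<ge> 1" using j by simp
        define n where "n = (j - 1) div k + 1"
        note bi = block_index[OF k j1, folded n_def]
        have "Nm * k \<le> j - 1" using j by simp
        then have "Nm \<le> (j - 1) div k" using k by (subst less_eq_div_iff_mult_less_eq) simp_all
        then have nN: "n \<ge> N" and nN1: "n \<ge> N1 + 1" unfolding n_def Nm_def by auto
        have dj0: "d j \<noteq> 0"
        proof
          assume "d j = 0"
          then have "a j = -\<infinity>" unfolding a_def using j1 by (subst ediv) auto
          then show False using j by simp
        qed
        have "a j = ereal (ln (real (d j)) / real j)" unfolding a_def using j1 dj0 by (subst ediv) auto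
        then have "ln (real (d j)) / real j > z" using j by simp
        then have lz: "ln (real (d j)) > z * real j" using j1 by (simp add: field_simps)
        have de: "d j \<le> e n" using A[OF bi] .
        then have en0: "e n \<noteq> 0" using dj0 by simp
        have "ln (real (d j)) \<le> ln (real (e n))" using de dj0 by simp
        have jge: "real j \<ge> real ((n - 1) * k) + 1" using bi(2) by linarith
        have zj0: "z * real j \<ge> z * (real ((n - 1) * k) + 1)" using jge z0 by (intro mult_left_mono) auto
        have eq: "real ((n - 1) * k) = (real n - 1) * real k" using bi(1) by (simp add: of_nat_diff)
        have zj: "z * real j \<ge> z * ((real n - 1) * real k + 1)" using zj0 unfolding eq .
        have pos: "z * real k - r > 0" using zk by simp
        have "z * (real k - 1) < real N1 * (z * real k - r)" using N1 pos by (simp add: field_simps)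
        also have "\<dots> \<le> real n * (z * real k - r)" using nN1 pos by (intro mult_right_mono) auto
        finally have "r * real n \<le> z * ((real n - 1) * real k + 1)" by (simp add: algebra_simps)
        then have "ln (real (e n)) > r * real n"
          using zj lz \<open>ln (real (d j)) \<le> ln (real (e n))\<close> by linarith
        then have "ln (real (e n)) / real n > r" using bi(1) by (simp add: field_simps)
        moreover have "b n = ereal (ln (real (e n)) / real n)" unfolding b_def using bi(1) en0 by (subst ediv) auto
        ultimately have "b n > ereal r" by simp
        then show False using N[OF nN] real by simp
      qed
    qed
  qed
  show ?thesis using upper lower unfolding G_def H_def a_def b_def by simp
qed


theorem proposition3p2:
  fixes scale :: "'k::field \<Rightarrow> 'a::ring_1 \<Rightarrow> 'a"
    and V :: "nat \<Rightarrow> 'a set" and k :: nat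
  assumes "is_K_algebra scale"
    and "finitely_generated scale"
    and "is_filtration scale V"
    and "k \<ge> 1"
  shows "h_alg scale (\<lambda>n. V (n * k)) = ereal (real k) * h_alg scale V"
proof (cases "finite_dim_algebra scale")
  case True
  then show ?thesis unfolding h_alg_def by simp
next
  case False
  have vs: "vector_space scale" using assms(1) unfolding is_K_algebra_def by blast
  note F = assms(3)
  have lhs: "h_alg scale (\<lambda>n. V (n * k)) =
     limsup (\<lambda>n. elog (quot_dim scale (V (n * k)) (V ((n - 1) * k))) / ereal (real n))"
    unfolding h_alg_def using False by simp
  have rhs: "h_alg scale V = limsup (\<lambda>j. elog (quot_dim scale (V j) (V (j - 1))) / ereal (real j))"
    unfolding h_alg_def using False by simp
  have "limsup (\<lambda>n. elog (quot_dim scale (V (n * k)) (V ((n - 1) * k))) / ereal (real n)) =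
        ereal (real k) * limsup (\<lambda>j. elog (quot_dim scale (V j) (V (j - 1))) / ereal (real j))"
  proof (rule limsup_block[OF assms(4)])
    fix n j :: nat
    assume n: "n \<ge> 1" and j: "(n - 1) * k < j" "j \<le> n * k"
    show "quot_dim scale (V j) (V (j - 1)) \<le> quot_dim scale (V (n * k)) (V ((n - 1) * k))"
      using j by (intro qd_mono[OF vs F]) auto
  next
    fix n :: nat and M :: real
    assume n: "n \<ge> 1"
      and hyp: "\<And>j. (n - 1) * k < j \<Longrightarrow> j \<le> n * k \<Longrightarrow> real (quot_dim scale (V j) (V (j - 1))) \<le> M"
    define m where "m = (n - 1) * k"
    have mk: "m + k = n * k" unfolding m_def using n by (cases n) auto
    have "real (quot_dim scale (V (m + k)) (V m)) \<le> real k * M"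
    proof (rule qd_block[OF vs F])
      fix i assume i: "i < k"
      have "(n - 1) * k < m + i + 1" "m + i + 1 \<le> n * k" using i mk unfolding m_def by auto
      from hyp[OF this] show "real (quot_dim scale (V (m + i + 1)) (V (m + i))) \<le> M" by simp
    qed
    then show "real (quot_dim scale (V (n * k)) (V ((n - 1) * k))) \<le> real k * M"
      unfolding mk unfolding m_def .
  next
    fix N :: nat
    obtain j where j: "j \<ge> N" "quot_dim scale (V (Suc j)) (V j) \<ge> 1"
      using infinite_steps[OF vs F False] by blast
    then show "\<exists>j\<ge>N. 1 \<le> quot_dim scale (V j) (V (j - 1))"
      by (intro exI[of _ "Suc j"]) simp
  qed
  then show ?thesis unfolding lhs rhs .
qed

end
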